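(* Consider $u_t+\beta u_x=g$ with constant $\beta>0$ and periodic boundary conditions, and an explicit $s$-stage Runge–Kutta method with coefficients $c_{\ell\kappa},d_{\ell\kappa}$ ($0\le\kappa\le\ell\le s-1$, $\sum_{\kappa}c_{\ell\kappa}=1$). Given $u_h^{n,0}=u_h^n\in\mathbb V^k$, time step $\tau$ and source functions $g^{n,\kappa}\in L^2(\Omega)$, the RKSV stages $u_h^{n,\ell+1}\in\mathbb V^k$ are defined by $$(u_h^{n,\ell+1},\omega^* )=\sum_{0\le\kappa\le\ell}\Big(c_{\ell\kappa}(u_h^{n,\kappa},\omega^* )+\tau d_{\ell\kappa}\Big(\sum_i\sum_{j=0}^k\omega^*_{i,j}\big(\hat f^{n,\kappa}_{i,j}-\hat f^{n,\kappa}_{i,j+1}\big)+(g^{n,\kappa},\omega^* )\Big)\Big)\quad\forall\omega^*\in\mathbb V^{k,*},$$ with upwind fluxes $\hat f^{n,\kappa}_{i,j}=\beta u_h^{n,\kappa}(x_{i,j})$ for $1\le j\le k$, $\hat f^{n,\kappa}_{i,0}=\beta u_h^{n,\kappa}(x_{i-\frac12}^-)$, $\hat f^{n,\kappa}_{i,k+1}=\beta u_h^{n,\kappa}(x_{i+\frac12}^-)$, and $u_h^{n+1}=u_h^{n,s}$. Under Assumption (S), these relations are equivalent to: for all $\omega\in\mathbb V^k$ and $\ell=0,\dots,s-1$, $$(u_h^{n,\ell+1},\omega)_*=\sum_{0\le\kappa\le\ell}\Big(c_{\ell\kappa}(u_h^{n,\kappa},\omega)_*+\tau d_{\ell\kappa}\big(\mathcal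 H^*(u_h^{n,\kappa},\omega)+(g^{n,\kappa},M^*\omega)\big)\Big).$$
   Context: Let $\Omega=[a,b]$ be partitioned into finitely many cells $I_i=[x_{i-\frac12},x_{i+\frac12}]$ with sizes $h_i$; indices are periodic (the point $x_{\frac12}$ is identified with the last interface). $(\cdot,\cdot)$ is the $L^2(\Omega)$ inner product, $(\cdot,\cdot)_{I_i}$ the $L^2(I_i)$ one. $\mathbb V^k=\{v\in L^2(\Omega): v|_{I_i}\in\mathbb P^k(I_i)\ \forall i\}$. Each $I_i$ has subdivision points $x_{i-\frac12}=x_{i,0}<x_{i,1}<\dots<x_{i,k}<x_{i,k+1}=x_{i+\frac12}$, control volumes $I_{i,j}=[x_{i,j},x_{i,j+1}]$, $j=0,\dots,k$; $\mathbb V^{k,*}$ is the space of functions constant on each $I_{i,j}$, $\omega^*_{i,j}$ the value of $\omega^*$ on $I_{i,j}$. On each $I_i$ a quadrature $Q_i^k(v)=\sum_{j=0}^{k+1}A_{i,j}v(x_{i,j})$ is given, error $R_i^k(v)=\int_{I_i}v\,dx-Q_i^k(v)$, exact on $\mathbb P^{k-1}(I_i)$; for piecewise functions, $Q_i^k$ uses the restriction to $I_i$ (endpoint values are limits from inside $I_i$). $M^*:\mathbb V^k\to\mathbb V^{k,*}$: for $v=\omega|_{I_i}$, $(M^*\omega)|_{I_{i,0}}=v(x_{i-\frac12})+A_{i,0}v'(x_{i-\frac12})$ and $(M^*\omega)|_{I_{i,j}}-(M^*\omega)|_{I_{i,j-1}}=A_{i,j}v'(x_{i,j})$, $j=1,\dots,k$.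 $L_{i,\ell}$ is the shifted Legendre polynomial of degree $\ell$ on $I_i$ with $L_{i,\ell}(x_{i+\frac12})=1$, $(L_{i,\ell},L_{i,m})_{I_i}=\delta_{\ell m}h_i/(2\ell+1)$. Assumption (S): $k\ge1$ and for every $i$, (1) $R_i^k(v)=0$ for all $v\in\mathbb P^{2k-1}(I_i)$, (2) $\frac{h_i}{2k-1}-Q_i^k(L_{i,k+1}L_{i,k-1})>0$; then $(v,\omega)_*:=(v,M^*\omega)$ is an inner product on $\mathbb V^k$. Jumps: $[\![v]\!]_{i+\frac12}=v(x_{i+\frac12}^+)-v(x_{i+\frac12}^-)$. For $\omega\in\mathbb V^k$ and piecewise smooth $v$: $\mathcal H^*(v,\omega)=\beta\Big(\sum_iQ_i^k(v\omega_x)+\sum_iv(x_{i+\frac12}^-)[\![\omega]\!]_{i+\frac12}-\sum_iA_{i,0}\,\omega_x(x_{i-\frac12}^+)[\![v]\!]_{i-\frac12}\Big)$. *)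

theory Defs
  imports "HOL-Analysis.Analysis" "HOL-Computational_Algebra.Polynomial"
begin

(* Mesh: N cells, cell i (i < N) is [xs i, xs (Suc i)], i.e. x_{i-1/2} = xs i.
   Subdivision points p i j, j = 0..k+1, with p i 0 = xs i, p i (k+1) = xs (Suc i).
   Periodic neighbours of a cell. *)
definition prev_cell :: "nat \<Rightarrow> nat \<Rightarrow> nat" where
  "prev_cell N i = (i + N - 1) mod N"

definition next_cell :: "nat \<Rightarrow> nat \<Rightarrow> nat" where
  "next_cell N i = Suc i mod N"

definition valid_mesh :: "nat \<Rightarrow> nat \<Rightarrow> (nat \<Rightarrow> real) \<Rightarrow> (nat \<Rightarrow> nat \<Rightarrow> real) \<Rightarrow> bool" where
  "valid_mesh N k xs p \<longleftrightarrow> 1 \<le> N \<and>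
     (\<forall>i<N. xs i < xs (Suc i)) \<and>
     (\<forall>i<N. p i 0 = xs i \<and> p i (Suc k) = xs (Suc i) \<and> (\<forall>j\<le>k. p i j < p i (Suc j)))"

(* Elements of V^k: v :: nat => real poly, v i = restriction to cell i, degree <= k.
   Elements of V^{k,star}: w :: nat => nat => real, w i j = value on I_{i,j}. *)
definition in_Vk :: "nat \<Rightarrow> nat \<Rightarrow> (nat \<Rightarrow> real poly) \<Rightarrow> bool" where
  "in_Vk N k v \<longleftrightarrow> (\<forall>i<N. degree (v i) \<le> k)"

definition pair_star :: "nat \<Rightarrow> nat \<Rightarrow> (nat \<Rightarrow> nat \<Rightarrow> real) \<Rightarrow> (nat \<Rightarrow> real poly) \<Rightarrow> (nat \<Rightarrow> nat \<Rightarrow> real) \<Rightarrow> real" where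
  "pair_star N k p v w = (\<Sum>i<N. \<Sum>j\<le>k. w i j * integral {p i j..p i (Suc j)} (\<lambda>x. poly (v i) x))"

definition src_star :: "nat \<Rightarrow> nat \<Rightarrow> (nat \<Rightarrow> nat \<Rightarrow> real) \<Rightarrow> (real \<Rightarrow> real) \<Rightarrow> (nat \<Rightarrow> nat \<Rightarrow> real) \<Rightarrow> real" where
  "src_star N k p g w = (\<Sum>i<N. \<Sum>j\<le>k. w i j * integral {p i j..p i (Suc j)} g)"

definition flux :: "nat \<Rightarrow> nat \<Rightarrow> (nat \<Rightarrow> real) \<Rightarrow> (nat \<Rightarrow> nat \<Rightarrow> real) \<Rightarrow> real \<Rightarrow> (nat \<Rightarrow> real poly) \<Rightarrow> nat \<Rightarrow> nat \<Rightarrow> real" where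
  "flux N k xs p \<beta> u i j =
     (if j = 0 then \<beta> * poly (u (prev_cell N i)) (xs (Suc (prev_cell N i)))
      else if j = Suc k then \<beta> * poly (u i) (xs (Suc i))
      else \<beta> * poly (u i) (p i j))"

definition flux_term :: "nat \<Rightarrow> nat \<Rightarrow> (nat \<Rightarrow> real) \<Rightarrow> (nat \<Rightarrow> nat \<Rightarrow> real) \<Rightarrow> real \<Rightarrow> (nat \<Rightarrow> real poly) \<Rightarrow> (nat \<Rightarrow> nat \<Rightarrow> real) \<Rightarrow> real" where
  "flux_term N k xs p \<beta> u w =
     (\<Sum>i<N. \<Sum>j\<le>k. w i j * (flux N k xs p \<beta> u i j - flux N k xs p \<beta> u i (Suc j)))"

definition quad :: "nat \<Rightarrow> (nat \<Rightarrow> nat \<Rightarrow> real) \<Rightarrow> (nat \<Rightarrow> nat \<Rightarrow> real) \<Rightarrow> nat \<Rightarrow> (real \<Rightarrow> real) \<Rightarrow> real" where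
  "quad k A p i f = (\<Sum>j\<le>Suc k. A i j * f (p i j))"

(* M^* : V^k -> V^{k,star}, unfolded recursion:
   (M^* w)_{i,j} = w(x_{i-1/2}) + \<Sum>_{m=0}^{j} A_{i,m} w'(x_{i,m}) *)
definition Mstar :: "(nat \<Rightarrow> nat \<Rightarrow> real) \<Rightarrow> (nat \<Rightarrow> real) \<Rightarrow> (nat \<Rightarrow> nat \<Rightarrow> real) \<Rightarrow> (nat \<Rightarrow> real poly) \<Rightarrow> nat \<Rightarrow> nat \<Rightarrow> real" where
  "Mstar A xs p w i j = poly (w i) (xs i) + (\<Sum>m\<le>j. A i m * poly (pderiv (w i)) (p i m))"

definition Hstar :: "nat \<Rightarrow> nat \<Rightarrow> (nat \<Rightarrow> real) \<Rightarrow> (nat \<Rightarrow> nat \<Rightarrow> real) \<Rightarrow> (nat \<Rightarrow> nat \<Rightarrow> real) \<Rightarrow> real \<Rightarrow> (nat \<Rightarrow> real poly) \<Rightarrow> (nat \<Rightarrow> real poly) \<Rightarrow> real" where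
  "Hstar N k xs p A \<beta> v w = \<beta> *
     ((\<Sum>i<N. quad k A p i (\<lambda>x. poly (v i) x * poly (pderiv (w i)) x))
      + (\<Sum>i<N. poly (v i) (xs (Suc i)) *
                 (poly (w (next_cell N i)) (xs (next_cell N i)) - poly (w i) (xs (Suc i))))
      - (\<Sum>i<N. A i 0 * poly (pderiv (w i)) (xs i) *
                 (poly (v i) (xs i) - poly (v (prev_cell N i)) (xs (Suc (prev_cell N i))))))"

(* shifted Legendre polynomial of degree l on [xl, xr] with h = xr - xl, normalised by value 1 at xr:
   L(x) = P_l(2(x-xl)/h - 1) = \<Sum>_m C(l,m) C(l+m,m) ((x - xr)/h)^m *)
definition shifted_legendre :: "real \<Rightarrow> real \<Rightarrow> nat \<Rightarrow> real \<Rightarrow> real" where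
  "shifted_legendre xl xr l x =
     (\<Sum>m\<le>l. real (l choose m) * real ((l + m) choose m) * ((x - xr) / (xr - xl)) ^ m)"

definition assumption_S :: "nat \<Rightarrow> nat \<Rightarrow> (nat \<Rightarrow> real) \<Rightarrow> (nat \<Rightarrow> nat \<Rightarrow> real) \<Rightarrow> (nat \<Rightarrow> nat \<Rightarrow> real) \<Rightarrow> bool" where
  "assumption_S N k xs p A \<longleftrightarrow> 1 \<le> k \<and>
     (\<forall>i<N.
        (\<forall>q :: real poly. degree q \<le> 2 * k - 1 \<longrightarrow>
            integral {xs i..xs (Suc i)} (poly q) = quad k A p i (poly q)) \<and>
        (xs (Suc i) - xs i) / real (2 * k - 1)
          - quad k A p i (\<lambda>x. shifted_legendre (xs i) (xs (Suc i)) (Suc k) x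
                              * shifted_legendre (xs i) (xs (Suc i)) (k - 1) x) > 0)"

end

theory Submission
  imports Defs
begin


lemma poly_integrable: "poly p integrable_on {a..b::real}"
  by (intro integrable_continuous_real continuous_intros)

lemma I_pderiv: assumes "a \<le> (b::real)"
  shows "integral {a..b} (poly (pderiv p)) = poly p b - poly p a"
proof -
  have "((poly (pderiv p)) has_integral (poly p b - poly p a)) {a..b}"
    apply (rule fundamental_theorem_of_calculus[OF assms])
    by (metis has_real_derivative_iff_has_vector_derivative has_field_derivative_at_within poly_DERIV)
  then show ?thesis by (rule integral_unique)
qed

lemma I_add: "integral {a..b::real} (poly (p + q)) = integral {a..b} (poly p) + integral {a..b} (poly q)"
  by (simp add: integral_add poly_integrable poly_add[abs_def] del: poly_add)

lemma I_diff: "integral {a..b::real} (poly (p - q)) = integral {a..b} (poly p) - integral {a..b} (poly q)"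
  by (simp add: integral_diff poly_integrable poly_diff[abs_def] del: poly_diff)

lemma I_smult: "integral {a..b::real} (poly (smult c p)) = c * integral {a..b} (poly p)"
  by (simp add: poly_smult[abs_def] del: poly_smult)

lemma I_minus: "integral {a..b::real} (poly (- p)) = - integral {a..b} (poly p)"
  using I_smult[of a b "-1" p] by simp

lemma I_parts: assumes "a \<le> (b::real)"
  shows "integral {a..b} (poly (pderiv p * q)) = poly p b * poly q b - poly p a * poly q a
     - integral {a..b} (poly (p * pderiv q))"
proof -
  have "integral {a..b} (poly (pderiv (p*q))) = poly p b * poly q b - poly p a * poly q a"
    using I_pderiv[OF assms] by simp
  moreover have "pderiv (p*q) = pderiv p * q + p * pderiv q" by (simp add: pderiv_mult algebra_simps)
  ultimately show ?thesis using I_add by (metis add_diff_cancel_right')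
qed

lemma I_sq_zero: assumes "a < (b::real)" "integral {a..b} (poly (p * p)) = 0"
  shows "p = 0"
proof (rule ccontr)
  assume np: "p \<noteq> 0"
  have c: "continuous_on (cbox a b) (poly (p*p))" by (rule continuous_on_poly) (rule continuous_on_id)
  have "\<forall>x\<in>cbox a b. poly (p*p) x = 0"
    using assms(2) integral_cbox_eq_0_iff[of a b "poly (p*p)", OF c] assms(1) by simp
  hence "{a..b} \<subseteq> {x. poly p x = 0}" by auto
  moreover have "infinite {a..b}" using assms(1) by (simp add: infinite_Icc)
  ultimately show False using poly_roots_finite[OF np] finite_subset by blast
qed

lemma fact_poch: "pochhammer (of_nat (Suc j)) m * fact j = (fact (j + m) :: real)"
proof (induction m)
  case (Suc m)
  have "pochhammer (of_nat (Suc j)) (Suc m) * fact j = (pochhammer (of_nat (Suc j)) m * fact j) * (of_nat (Suc j) + of_nat m :: real)"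
    by (simp add: pochhammer_Suc algebra_simps)
  also have "\<dots> = fact (j+m) * (of_nat (Suc (j + m)) :: real)" using Suc by simp
  also have "\<dots> = fact (j + Suc m)" by (simp add: algebra_simps)
  finally show ?case .
qed simp

lemma higher_pderiv_low: assumes "degree (g::real poly) < m" shows "(pderiv ^^ m) g = 0"
  by (rule poly_eqI) (use assms in \<open>auto simp: coeff_higher_pderiv coeff_eq_0\<close>)

lemma deg_le_pred: assumes "degree (g::real poly) \<le> n" "coeff g n = 0" shows "degree g \<le> n - 1"
proof (rule degree_le, intro allI impI)
  fix i assume i: "n - 1 < i"
  show "coeff g i = 0"
  proof (cases "i = n")
    case True then show ?thesis using assms by simp
  next
    case False then have "n < i" using i by linarith
    then show ?thesis using assms(1) by (intro coeff_eq_0) linarith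
  qed
qed

lemma coeff_mult_top: assumes "degree (p::real poly) \<le> m" "degree q \<le> n"
  shows "coeff (p * q) (m + n) = coeff p m * coeff q n"
proof (cases "degree p = m \<and> degree q = n")
  case True then show ?thesis using coeff_mult_degree_sum by metis
next
  case False
  hence lt: "degree p < m \<or> degree q < n" using assms by linarith
  hence "coeff p m = 0 \<or> coeff q n = 0" by (auto simp: coeff_eq_0)
  moreover have "degree (p*q) < m + n"
    using degree_mult_le[of p q] lt assms by linarith
  ultimately show ?thesis by (simp add: coeff_eq_0)
qed

lemma pderiv_lin_pow: "pderiv ([:c,1:]^Suc m) = smult (of_nat (Suc m)) ([:c,1::real:]^m)"
  by (simp add: pderiv_power_Suc pderiv_pCons del: power_Suc of_nat_Suc)

lemma poly_0_fun [simp]: "poly (0::real poly) = (\<lambda>_. 0)" by (rule ext) simp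



lemma DV1: assumes "[:-c,1:]^(Suc n) dvd (p::real poly)" shows "[:-c,1:]^n dvd pderiv p"
proof -
  obtain q where q: "p = [:-c,1:]^(Suc n) * q" using assms by (auto elim: dvdE)
  have "pderiv p = [:-c,1:]^(Suc n) * pderiv q + q * smult (of_nat (Suc n)) ([:-c,1:]^n)"
    by (simp only: q pderiv_mult pderiv_lin_pow)
  also have "\<dots> = [:-c,1:]^n * ([:-c,1:] * pderiv q + smult (of_nat (Suc n)) q)"
    by (simp only: power_Suc) (simp add: algebra_simps del: of_nat_Suc)
  finally show ?thesis by (simp del: power_Suc)
qed

lemma DVm: assumes "[:-c,1:]^n dvd (p::real poly)" "m \<le> n"
  shows "[:-c,1:]^(n-m) dvd (pderiv^^m) p"
  using assms(2)
proof (induction m)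
  case (Suc m)
  have e: "n - m = Suc (n - Suc m)" using Suc.prems by simp
  have "[:-c,1:]^(Suc (n - Suc m)) dvd (pderiv^^m) p" using Suc e by simp
  then show ?case by (simp add: DV1 del: power_Suc)
qed (use assms in simp)
definition WW :: "real \<Rightarrow> real \<Rightarrow> nat \<Rightarrow> real poly" where
  "WW a b l = [:-a,1:]^l * [:-b,1:]^l"

lemma root_of_dvd: assumes "[:-c,1:]^(Suc n) dvd (p::real poly)" shows "poly p c = 0"
proof -
  have "[:-c,1:] dvd [:-c,1:]^(Suc n)" by (simp only: power_Suc dvd_triv_left)
  then have "[:-c,1:] dvd p" using assms dvd_trans by blast
  then show ?thesis by (simp add: poly_eq_0_iff_dvd)
qed

lemma WW_van: assumes "m < l"
  shows "poly ((pderiv^^m) (WW a b l)) a = 0" "poly ((pderiv^^m) (WW a b l)) b = 0"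
proof -
  have "[:-a,1:]^l dvd WW a b l" "[:-b,1:]^l dvd WW a b l" unfolding WW_def by auto
  then have "[:-a,1:]^(l-m) dvd (pderiv^^m) (WW a b l)" "[:-b,1:]^(l-m) dvd (pderiv^^m) (WW a b l)"
    using DVm assms by auto
  moreover have "l - m = Suc (l - m - 1)" using assms by simp
  ultimately show "poly ((pderiv^^m) (WW a b l)) a = 0" "poly ((pderiv^^m) (WW a b l)) b = 0"
    using root_of_dvd by metis+
qed

lemma F1: assumes "a \<le> b" "m \<le> l"
  shows "integral {a..b} (poly ((pderiv^^m) (WW a b l) * g)) = (-1)^m * integral {a..b} (poly (WW a b l * (pderiv^^m) g))"
  using assms(2)
proof (induction m arbitrary: g)
  case (Suc m)
  have "integral {a..b} (poly ((pderiv^^Suc m) (WW a b l) * g)) = integral {a..b} (poly (pderiv ((pderiv^^m) (WW a b l)) * g))"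
    by simp
  also have "\<dots> = - integral {a..b} (poly ((pderiv^^m) (WW a b l) * pderiv g))"
    using I_parts[OF assms(1)] WW_van[of m l a b] Suc.prems by simp
  also have "\<dots> = - ((-1)^m * integral {a..b} (poly (WW a b l * (pderiv^^m) (pderiv g))))"
    by (simp only: Suc.IH[OF Suc_leD[OF Suc.prems]])
  also have "(pderiv^^m) (pderiv g) = (pderiv^^Suc m) g" by (simp add: funpow_Suc_right del: funpow.simps)
  finally show ?case by simp
qed simp

lemma d1: fixes a :: real shows "pderiv (smult (1 / of_nat (Suc m)) ([:-a,1:]^Suc m)) = [:-a,1:]^m"
    by (simp add: pderiv_smult pderiv_lin_pow del: of_nat_Suc power_Suc)

lemma Beta: fixes a b :: real assumes "a \<le> b"
  shows "integral {a..b} (poly ([:-a,1:]^m * [:-b,1:]^n)) = (-1)^n * fact m * fact n * (b-a)^(m+n+1) / fact (m+n+1)"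
proof (induction n arbitrary: m)
  case 0
  have "integral {a..b} (poly ([:-a,1:]^m)) = (b-a)^(Suc m) / of_nat (Suc m)"
    using I_pderiv[OF assms, of "smult (1 / of_nat (Suc m)) ([:-a,1:]^Suc m)"] d1[of m a] by (simp add: left_diff_distrib)
  moreover have "(-1::real)^0 * fact m * fact 0 * (b-a)^(m+0+1) / fact (m+0+1) = (b-a)^Suc m / of_nat (Suc m)"
    by (simp add: fact_Suc field_simps del: of_nat_Suc power_Suc)
  moreover have "[:-a,1:]^m * [:-b,1:]^0 = [:-a,1::real:]^m" by simp
  ultimately show ?case by (simp only:)
next
  case (Suc n)
  have "integral {a..b} (poly ([:-a,1:]^m * [:-b,1:]^Suc n)) =
     - integral {a..b} (poly (smult (1 / of_nat (Suc m)) ([:-a,1:]^Suc m) * pderiv ([:-b,1:]^Suc n)))"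
    using I_parts[OF assms, of "smult (1 / of_nat (Suc m)) ([:-a,1:]^Suc m)" "[:-b,1:]^Suc n"] d1[of m a] by (simp del: power_Suc)
  also have "smult (1 / of_nat (Suc m)) ([:-a,1:]^Suc m) * pderiv ([:-b,1:]^Suc n)
     = smult (of_nat (Suc n) / of_nat (Suc m)) ([:-a,1:]^Suc m * [:-b,1:]^n)"
    by (simp add: pderiv_lin_pow del: of_nat_Suc power_Suc)
  also have "- integral {a..b} (poly \<dots>) = - (of_nat (Suc n) / of_nat (Suc m)) * ((-1)^n * fact (Suc m) * fact n * (b-a)^(Suc m+n+1) / fact (Suc m+n+1))"
    by (simp only: I_smult Suc)
  also have "\<dots> = (-1)^Suc n * fact m * fact (Suc n) * (b-a)^(m+Suc n+1) / fact (m+Suc n+1)"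
  proof -
    have e: "Suc m + n + 1 = m + Suc n + 1" by simp
    have "- (of_nat (Suc n) / of_nat (Suc m)) * ((-1)^n * (of_nat (Suc m) * fact m) * fact n * (b-a)^(m+Suc n+1) / fact (m+Suc n+1))
      = (-1)^Suc n * fact m * (of_nat (Suc n) * fact n) * (b-a)^(m+Suc n+1) / (fact (m+Suc n+1) :: real)"
      by (simp only: power_Suc) (simp add: divide_simps del: of_nat_Suc)
    then show ?thesis unfolding e fact_Suc[of m] fact_Suc[of n] .
  qed
  finally show ?case .
qed



definition PP :: "real \<Rightarrow> real \<Rightarrow> nat \<Rightarrow> real poly" where
  "PP a b l = (pderiv^^l) (WW a b l)"

lemma WW_deg: "degree (WW a b l) = 2*l" "coeff (WW a b l) (2*l) = 1"
proof -
  have nz: "[:-a,1:]^l \<noteq> 0" "[:-b,1::real:]^l \<noteq> 0" by auto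
  show "degree (WW a b l) = 2*l" unfolding WW_def
    using degree_mult_eq[OF nz] by (simp add: degree_linear_power)
  have "coeff (WW a b l) (degree ([:-a,1:]^l) + degree ([:-b,1::real:]^l)) = 1"
    unfolding WW_def coeff_mult_degree_sum by (simp add: degree_linear_power coeff_linear_power)
  then show "coeff (WW a b l) (2*l) = 1" by (simp add: degree_linear_power mult_2)
qed

lemma PP_deg: "degree (PP a b l) = l"
  unfolding PP_def degree_higher_pderiv WW_deg by simp

lemma PP_coeff: "coeff (PP a b l) l = fact (2*l) / fact l"
proof -
  have "coeff (PP a b l) l = pochhammer (of_nat (Suc l)) l * coeff (WW a b l) (l + l)"
    unfolding PP_def coeff_higher_pderiv by simp
  also have "\<dots> = pochhammer (of_nat (Suc l)) l" using WW_deg(2)[of a b l] by (simp add: mult_2)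
  also have "\<dots> = fact (2*l) / fact l" using fact_poch[of l l] unfolding mult_2 by (simp add: field_simps)
  finally show ?thesis .
qed

lemma PP_top: "(pderiv^^l) (PP a b l) = [:fact (2*l):]"
proof (rule poly_eqI)
  fix n
  have "(pderiv^^l) (PP a b l) = (pderiv^^(2*l)) (WW a b l)"
    unfolding PP_def mult_2 funpow_add by simp
  then have "coeff ((pderiv^^l) (PP a b l)) n = pochhammer (of_nat (Suc n)) (2*l) * coeff (WW a b l) (n + 2*l)"
    by (simp add: coeff_higher_pderiv)
  also have "\<dots> = (if n = 0 then fact (2*l) else 0)"
  proof (cases "n = 0")
    case True then show ?thesis using WW_deg(2)[of a b l] by (simp add: pochhammer_fact)
  next
    case False then have "coeff (WW a b l) (n + 2*l) = 0" by (intro coeff_eq_0) (simp add: WW_deg)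
    then show ?thesis using False by simp
  qed
  finally show "coeff ((pderiv^^l) (PP a b l)) n = coeff [:fact (2*l):] n" by (cases n) auto
qed

lemma Dpow: "m \<le> n \<Longrightarrow> (pderiv^^m) ([:c,1:]^n) = smult (pochhammer (of_nat (n-m+1)) m) ([:c,1::real:]^(n-m))"
proof (induction m)
  case (Suc m)
  have e: "n - m = Suc (n - Suc m)" using Suc.prems by simp
  have "(pderiv^^Suc m) ([:c,1:]^n) = pderiv (smult (pochhammer (of_nat (n-m+1)) m) ([:c,1::real:]^(n-m)))"
    using Suc by simp
  also have "\<dots> = smult (pochhammer (of_nat (n-m+1)) m * of_nat (n - m)) ([:c,1::real:]^(n - Suc m))"
    unfolding e pderiv_smult pderiv_lin_pow by simp
  also have "pochhammer (of_nat (n-m+1)) m * of_nat (n - m) = (pochhammer (of_nat (n - Suc m + 1)) (Suc m) :: real)"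
    unfolding pochhammer_rec using e by (simp add: algebra_simps)
  finally show ?case .
qed simp


lemma WW_expand: "WW a b l = (\<Sum>j\<le>l. smult (of_nat (l choose j) * (b-a)^(l-j)) ([:-b,1:]^(j+l)))"
proof (rule poly_eq_poly_eq_iff[THEN iffD1], rule ext)
  fix x :: real
  have "poly (WW a b l) x = ((x - b) + (b - a))^l * (x-b)^l" unfolding WW_def by simp
  also have "\<dots> = (\<Sum>j\<le>l. of_nat (l choose j) * (x-b)^j * (b-a)^(l-j)) * (x-b)^l"
    by (simp only: binomial_ring)
  also have "\<dots> = (\<Sum>j\<le>l. of_nat (l choose j) * (b-a)^(l-j) * (x-b)^(j+l))"
    unfolding sum_distrib_right by (rule sum.cong) (simp_all add: power_add algebra_simps)
  also have "\<dots> = poly (\<Sum>j\<le>l. smult (of_nat (l choose j) * (b-a)^(l-j)) ([:-b,1:]^(j+l))) x"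
    by (simp add: poly_sum)
  finally show "poly (WW a b l) x = poly (\<Sum>j\<le>l. smult (of_nat (l choose j) * (b-a)^(l-j)) ([:-b,1:]^(j+l))) x" .
qed

lemma PP_expand: "PP a b l = (\<Sum>j\<le>l. smult (of_nat (l choose j) * (b-a)^(l-j) * pochhammer (of_nat (Suc j)) l) ([:-b,1:]^j))"
  unfolding PP_def WW_expand higher_pderiv_sum higher_pderiv_smult
  by (rule sum.cong) (simp_all add: Dpow)

lemma SL_poly: assumes "a < b"
  shows "poly (smult (1 / (fact l * (b-a)^l)) (PP a b l)) x = shifted_legendre a b l x"
proof -
  have h: "b - a \<noteq> 0" using assms by simp
  have "poly (smult (1 / (fact l * (b-a)^l)) (PP a b l)) x =
     (\<Sum>j\<le>l. (of_nat (l choose j) * (b-a)^(l-j) * pochhammer (of_nat (Suc j)) l) / (fact l * (b-a)^l) * (x - b)^j)"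
    unfolding PP_expand by (simp add: poly_sum sum_distrib_left)
  also have "\<dots> = (\<Sum>j\<le>l. real (l choose j) * real ((l + j) choose j) * ((x - b) / (b - a)) ^ j)"
  proof (rule sum.cong)
    fix j assume j: "j \<in> {..l}"
    then have jl: "j \<le> l" by simp
    have p1: "pochhammer (of_nat (Suc j)) l = (fact (j + l) / fact j :: real)"
      using fact_poch[of j l] by (simp add: field_simps)
    have p2: "real ((l + j) choose j) = fact (l + j) / (fact j * fact l)"
      using binomial_fact[of j "l+j"] by simp
    have p3: "(b - a)^l = (b-a)^(l-j) * (b-a)^j" using jl by (simp add: power_add[symmetric])
    show "(of_nat (l choose j) * (b-a)^(l-j) * pochhammer (of_nat (Suc j)) l) / (fact l * (b-a)^l) * (x - b)^j
       = real (l choose j) * real ((l + j) choose j) * ((x - b) / (b - a)) ^ j"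
      unfolding p1 p2 p3 using h by (simp add: field_simps power_divide add.commute)
  qed simp
  also have "\<dots> = shifted_legendre a b l x" unfolding shifted_legendre_def by simp
  finally show ?thesis .
qed




definition pint :: "real poly \<Rightarrow> real poly" where
  "pint q = (\<Sum>i\<le>degree q. monom (coeff q i / of_nat (Suc i)) (Suc i))"

lemma pint_deriv: "pderiv (pint q) = q"
proof -
  have "pderiv (pint q) = (\<Sum>i\<le>degree q. pderiv (monom (coeff q i / of_nat (Suc i)) (Suc i)))"
    unfolding pint_def using higher_pderiv_sum[of 1] by simp
  also have "\<dots> = (\<Sum>i\<le>degree q. monom (coeff q i) i)"
    by (rule sum.cong) (simp_all add: pderiv_monom del: of_nat_Suc)
  finally show ?thesis by (simp add: poly_as_sum_of_monoms)
qed

lemma pint_coeff: "coeff (pint q) m = (if m = 0 then 0 else coeff q (m - 1) / of_nat m)"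
proof -
  have "coeff (pint q) m = (\<Sum>i\<le>degree q. if Suc i = m then coeff q i / of_nat (Suc i) else 0)"
    unfolding pint_def coeff_sum coeff_monom by simp
  also have "\<dots> = (if m = 0 then 0 else coeff q (m - 1) / of_nat m)"
  proof (cases m)
    case 0 then show ?thesis by simp
  next
    case (Suc n)
    have "(\<Sum>i\<le>degree q. if Suc i = m then coeff q i / of_nat (Suc i) else 0)
        = (\<Sum>i\<le>degree q. if i = n then coeff q n / of_nat m else 0)"
      by (rule sum.cong) (auto simp: Suc)
    also have "\<dots> = (if n \<le> degree q then coeff q n / of_nat m else 0)" by (simp add: sum.delta)
    also have "\<dots> = coeff q n / of_nat m" by (auto simp: coeff_eq_0)
    finally show ?thesis using Suc by simp
  qed
  finally show ?thesis .
qed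

lemma pint_degree: "degree (pint q) \<le> Suc (degree q)"
  by (rule degree_le) (auto simp: pint_coeff coeff_eq_0)

lemma sum_split_ends: "(\<Sum>j\<le>Suc k. f j) = f 0 + (\<Sum>j\<in>{1..k}. f j) + (f (Suc k) :: real)"
proof -
  have "{..k} = insert 0 {1..k}" by auto
  then have "(\<Sum>j\<le>k. f j) = f 0 + (\<Sum>j\<in>{1..k}. f j)" by simp
  then show ?thesis by simp
qed

lemma R_decomp:
  fixes Q :: "(real \<Rightarrow> real) \<Rightarrow> real"
  assumes k1: "1 \<le> k" and E: "\<forall>q::real poly. degree q \<le> 2*k-1 \<longrightarrow> integral {a..b} (poly q) = Q (poly q)"
    and lin: "\<And>p q c. Q (poly (p + smult c q)) = Q (poly p) + c * Q (poly q)"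
    and df: "degree f \<le> 2*k"
  shows "integral {a..b} (poly f) - Q (poly f) = coeff f (2*k) * (integral {a..b} (poly (monom 1 (2*k))) - Q (poly (monom 1 (2*k))))"
proof -
  define g where "g = f + smult (- coeff f (2*k)) (monom 1 (2*k))"
  have "degree (monom (1::real) (2*k)) \<le> 2*k" by (simp add: degree_monom_le)
  then have "degree g \<le> 2*k" unfolding g_def using df by (intro degree_add_le) (auto intro: order.trans[OF degree_smult_le])
  moreover have "coeff g (2*k) = 0" unfolding g_def by simp
  ultimately have "degree g \<le> 2*k-1" by (rule deg_le_pred)
  then have "integral {a..b} (poly g) = Q (poly g)" using E by blast
  moreover have "integral {a..b} (poly g) = integral {a..b} (poly f) - coeff f (2*k) * integral {a..b} (poly (monom 1 (2*k)))"
    unfolding g_def I_add I_smult by simp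
  moreover have "Q (poly g) = Q (poly f) - coeff f (2*k) * Q (poly (monom 1 (2*k)))"
    unfolding g_def lin by simp
  ultimately show ?thesis by (simp add: algebra_simps)
qed




lemma final_arith:
  fixes h rho alpha :: real and n :: nat
  assumes h: "h > 0" and al: "alpha \<noteq> 0"
    and eq: "(alpha * fact (Suc n) / fact (2 * Suc n))^2 * fact (2 * Suc n) * (fact (Suc n))^2 * h^(2 * Suc n + 1) / fact (2 * Suc n + 1)
             = - rho * of_nat (Suc n) * alpha^2 / of_nat (Suc (Suc n))"
  shows "(1 / (fact (Suc (Suc n)) * h^(Suc (Suc n)))) * (fact (2 * Suc (Suc n)) / fact (Suc (Suc n)))
         * ((1 / (fact n * h^n)) * (fact (2 * n) / fact n)) * rho = - h / of_nat (2 * Suc n - 1)"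
proof -
  define F1 where "F1 = (fact n :: real)"
  define F2 where "F2 = (fact (2*n) :: real)"
  define H where "H = h^n"
  define A1 where "A1 = real n + 1"
  define A2 where "A2 = real n + 2"
  define B1 where "B1 = 2 * real n + 1"
  define B3 where "B3 = 2 * real n + 3"
  have nz: "F1 \<noteq> 0" "F2 \<noteq> 0" "h \<noteq> 0" "H \<noteq> 0" "A1 \<noteq> 0" "A2 \<noteq> 0" "B1 \<noteq> 0" "B3 \<noteq> 0" "alpha \<noteq> 0"
    unfolding F1_def F2_def H_def A1_def A2_def B1_def B3_def using h al by auto
  have F1: "fact (Suc n) = A1*F1" "fact (Suc (Suc n)) = A2*A1*F1"
    unfolding F1_def A1_def A2_def by (simp_all add: fact_Suc algebra_simps)
  have e1: "2 * Suc n = Suc (Suc (2*n))" "2 * Suc (Suc n) = Suc (Suc (Suc (Suc (2*n))))" "2 * Suc n + 1 = Suc (Suc (Suc (2*n)))" by simp_all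
  have F2: "fact (2 * Suc n) = (2*A1)*B1*F2" "fact (2 * Suc n + 1) = B3*(2*A1)*B1*F2"
    "fact (2 * Suc (Suc n)) = (2*A2)*B3*(2*A1)*B1*F2"
    unfolding F2_def e1 A1_def A2_def B1_def B3_def by (simp_all add: fact_Suc algebra_simps)
  have e3: "2 * Suc n + 1 = Suc (Suc (Suc (n + n)))" by simp
  have hp: "h^(2 * Suc n + 1) = h*h*h*H*H" "h^(Suc (Suc n)) = h*h*H"
    unfolding H_def e3 by (simp_all only: power_Suc power_add mult.assoc)
  have ofn: "real (Suc n) = A1" "real (Suc (Suc n)) = A2" "real (2 * Suc n - 1) = B1"
    unfolding A1_def A2_def B1_def by simp_all
  have eq2: "(alpha * (A1*F1) / ((2*A1)*B1*F2))^2 * ((2*A1)*B1*F2) * (A1*F1)^2 * (h*h*h*H*H) / (B3*(2*A1)*B1*F2)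
             = - rho * A1 * alpha^2 / A2"
    using eq unfolding F1 F2 hp ofn .
  have rho: "rho = - ((alpha * (A1*F1) / ((2*A1)*B1*F2))^2 * ((2*A1)*B1*F2) * (A1*F1)^2 * (h*h*h*H*H) / (B3*(2*A1)*B1*F2) * A2 / (A1 * alpha^2))"
    using eq2 nz by (simp add: field_simps)
  have "(1 / (A2*A1*F1 * (h*h*H))) * (((2*A2)*B3*(2*A1)*B1*F2) / (A2*A1*F1))
         * ((1 / (F1 * H)) * (F2 / F1)) * rho = - h / B1"
    unfolding rho using nz by (simp add: field_simps power4_eq_xxxx power2_eq_square)
  then show ?thesis unfolding F1 F2 hp ofn F1_def[symmetric] F2_def[symmetric] H_def[symmetric] .
qed


lemma sign_helper: fixes c X F A h y :: real
  assumes "y = c^2 * ((-1)^k * (X * ((-1)^k * A * A * h / F)))"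
  shows "y = c^2 * X * A^2 * h / F"
proof -
  have m1: "(-1::real)^k * (-1)^k = 1" by (simp add: power_mult_distrib[symmetric])
  have "c^2 * ((-1)^k * (X * ((-1)^k * A * A * h / F))) = ((-1)^k * (-1)^k) * (c^2 * X * A^2 * h / F)"
    by (simp add: power2_eq_square)
  then show ?thesis using m1 assms by simp
qed

lemma INJ:
  fixes a b :: real and x Aw :: "nat \<Rightarrow> real" and v :: "real poly" and k :: nat
  assumes ab: "a < b" and x0: "x 0 = a" and xk: "x (Suc k) = b" and k1: "1 \<le> k"
    and E: "\<forall>q::real poly. degree q \<le> 2*k-1 \<longrightarrow> integral {a..b} (poly q) = (\<Sum>j\<le>Suc k. Aw j * poly q (x j))"
    and C2: "(b-a)/real(2*k-1) - (\<Sum>j\<le>Suc k. Aw j * (shifted_legendre a b (Suc k) (x j) * shifted_legendre a b (k-1) (x j))) > 0"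
    and dv: "degree v \<le> k"
    and M0: "\<forall>j\<le>k. poly v a + (\<Sum>m\<le>j. Aw m * poly (pderiv v) (x m)) = 0"
  shows "v = 0"
proof (rule ccontr)
  assume vnz: "v \<noteq> 0"
  have ab': "a \<le> b" using ab by simp
  define Q where "Q f = (\<Sum>j\<le>Suc k. Aw j * f (x j))" for f :: "real \<Rightarrow> real"
  define I where "I p = integral {a..b} (poly p)" for p
  have E': "\<forall>q::real poly. degree q \<le> 2*k-1 \<longrightarrow> integral {a..b} (poly q) = Q (poly q)"
    using E unfolding Q_def by blast
  have EQ: "\<And>q. degree q \<le> 2*k-1 \<Longrightarrow> I q = Q (poly q)" using E' unfolding I_def by blast
  have lin: "\<And>p q c. Q (poly (p + smult c q)) = Q (poly p) + c * Q (poly q)"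
    unfolding Q_def by (simp add: algebra_simps sum.distrib sum_distrib_left)
  have S1: "Aw m * poly (pderiv v) (x m) = 0" if m: "1 \<le> m" "m \<le> k" for m
  proof -
    obtain m' where m': "m = Suc m'" using m by (cases m) auto
    have "poly v a + (\<Sum>i\<le>m. Aw i * poly (pderiv v) (x i)) = 0" "poly v a + (\<Sum>i\<le>m'. Aw i * poly (pderiv v) (x i)) = 0"
      using M0 m m' by auto
    then show ?thesis unfolding m' sum.atMost_Suc by linarith
  qed
  have S2: "poly v a + Aw 0 * poly (pderiv v) a = 0" using spec[OF M0, of 0] x0 by simp
  have dv': "degree (pderiv v) \<le> k - 1" using dv by (simp add: degree_pderiv)
  have S3: "Aw (Suc k) * poly (pderiv v) b = poly v b"
  proof -
    have "I (pderiv v) = Q (poly (pderiv v))" using dv' by (intro EQ) linarith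
    moreover have "I (pderiv v) = poly v b - poly v a" unfolding I_def using I_pderiv[OF ab'] by simp
    moreover have "Q (poly (pderiv v)) = (\<Sum>j\<le>k. Aw j * poly (pderiv v) (x j)) + Aw (Suc k) * poly (pderiv v) b"
      unfolding Q_def using xk by simp
    moreover have "poly v a + (\<Sum>j\<le>k. Aw j * poly (pderiv v) (x j)) = 0" using M0 by simp
    ultimately show ?thesis by linarith
  qed
  have S4: "Q (poly (pderiv v * F)) = poly v b * poly F b - poly v a * poly F a" for F
  proof -
    have "Q (poly (pderiv v * F)) = (\<Sum>j\<le>Suc k. (Aw j * poly (pderiv v) (x j)) * poly F (x j))"
      unfolding Q_def by (simp add: mult.assoc)
    also have "\<dots> = (Aw 0 * poly (pderiv v) (x 0)) * poly F (x 0) + (\<Sum>j\<in>{1..k}. (Aw j * poly (pderiv v) (x j)) * poly F (x j))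
        + (Aw (Suc k) * poly (pderiv v) (x (Suc k))) * poly F (x (Suc k))" by (rule sum_split_ends)
    finally have eq: "Q (poly (pderiv v * F)) = (Aw 0 * poly (pderiv v) (x 0)) * poly F (x 0) + (\<Sum>j\<in>{1..k}. (Aw j * poly (pderiv v) (x j)) * poly F (x j))
        + (Aw (Suc k) * poly (pderiv v) (x (Suc k))) * poly F (x (Suc k))" .
    have z: "(\<Sum>j\<in>{1..k}. (Aw j * poly (pderiv v) (x j)) * poly F (x j)) = 0" using S1 by (intro sum.neutral) auto
    have a0: "Aw 0 * poly (pderiv v) a = - poly v a" using S2 by linarith
    show ?thesis using eq unfolding z x0 xk S3 a0 by simp
  qed
  have S5: "I (pderiv v * F) - Q (poly (pderiv v * F)) = - I (v * pderiv F)" for F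
    using S4[of F] I_parts[OF ab', of v F] unfolding I_def by simp
  have S6: "I (v * pderiv F) = 0" if dF: "degree F \<le> k" for F
  proof -
    have "degree (pderiv v * F) \<le> 2*k-1" using degree_mult_le[of "pderiv v" F] dv' dF k1 by linarith
    then have "I (pderiv v * F) = Q (poly (pderiv v * F))" by (rule EQ)
    then show ?thesis using S5[of F] by linarith
  qed
  have S7: "I (v * q) = 0" if dq: "degree q \<le> k-1" for q
  proof -
    have "degree (pint q) \<le> k" using pint_degree[of q] k1 dq by linarith
    then show ?thesis using S6[of "pint q"] by (simp add: pint_deriv)
  qed
  define \<alpha> where "\<alpha> = coeff v k"
  have anz: "\<alpha> \<noteq> 0"
  proof
    assume "\<alpha> = 0"
    then have "degree v \<le> k-1" using deg_le_pred dv unfolding \<alpha>_def by blast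
    then have "I (v * v) = 0" by (rule S7)
    then show False using I_sq_zero[OF ab] vnz unfolding I_def by blast
  qed
  define \<rho> where "\<rho> = I (monom 1 (2*k)) - Q (poly (monom 1 (2*k)))"
  have RD: "I f - Q (poly f) = coeff f (2*k) * \<rho>" if df: "degree f \<le> 2*k" for f
    unfolding \<rho>_def I_def by (rule R_decomp[OF k1 E' lin df])
  have S8: "I (v * v) = - \<rho> * of_nat k * \<alpha>^2 / of_nat (Suc k)"
  proof -
    define F where "F = pint v"
    have dF: "degree F \<le> k+1" using pint_degree[of v] dv unfolding F_def by linarith
    have cF: "coeff F (k+1) = \<alpha> / of_nat (Suc k)" unfolding F_def pint_coeff \<alpha>_def by simp
    have cv': "coeff (pderiv v) (k-1) = of_nat k * \<alpha>" unfolding coeff_pderiv \<alpha>_def using k1 by simp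
    have d: "degree (pderiv v * F) \<le> 2*k" using degree_mult_le[of "pderiv v" F] dv' dF k1 by linarith
    have kk: "k - 1 + (k+1) = 2*k" using k1 by simp
    have c: "coeff (pderiv v * F) (2*k) = of_nat k * \<alpha> * (\<alpha> / of_nat (Suc k))"
      using coeff_mult_top[OF dv' dF] cF cv' unfolding kk by simp
    have "I (pderiv v * F) - Q (poly (pderiv v * F)) = - I (v * v)" using S5[of F] unfolding F_def pint_deriv by simp
    then have "I (v * v) = - (coeff (pderiv v * F) (2*k) * \<rho>)" using RD[OF d] by linarith
    then show ?thesis unfolding c by (simp add: field_simps power2_eq_square)
  qed
  define c where "c = \<alpha> * fact k / fact (2*k)"
  have orthP: "I (PP a b k * q) = 0" if dq: "degree q \<le> k-1" for q
  proof -
    have "(pderiv^^k) q = 0" using k1 dq by (intro higher_pderiv_low) linarith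
    then show ?thesis unfolding I_def PP_def using F1[OF ab', of k k q] by simp
  qed
  have vP: "v = smult c (PP a b k)"
  proof -
    define r where "r = v - smult c (PP a b k)"
    have dr: "degree r \<le> k" unfolding r_def using dv PP_deg[of a b k]
      by (intro degree_diff_le) (auto intro: order.trans[OF degree_smult_le])
    have "coeff r k = 0" unfolding r_def c_def \<alpha>_def using PP_coeff[of a b k] by simp
    then have dr': "degree r \<le> k-1" using deg_le_pred dr by blast
    have "I (r * r) = I (v * r) - c * I (PP a b k * r)" unfolding r_def I_def
      by (simp add: left_diff_distrib I_diff I_smult del: poly_mult)
    also have "\<dots> = 0" using S7[OF dr'] orthP[OF dr'] by simp
    finally have "r = 0" using I_sq_zero[OF ab] unfolding I_def by blast
    then show ?thesis unfolding r_def by simp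
  qed
  have S9: "I (v * v) = c^2 * fact (2*k) * (fact k)^2 * (b-a)^(2*k+1) / fact (2*k+1)"
  proof -
    have "I (v * v) = c^2 * I (PP a b k * PP a b k)" unfolding vP I_def
      by (simp add: I_smult power2_eq_square del: poly_mult)
    also have "I (PP a b k * PP a b k) = (-1)^k * I (WW a b k * [:fact (2*k):])"
      using F1[OF ab' order.refl[of k], of "PP a b k", unfolded PP_def[symmetric] PP_top] unfolding I_def .
    also have "WW a b k * [:fact (2*k):] = smult (fact (2*k)) (WW a b k)"
      by (simp only: mult.commute[of "WW a b k"] mult_pCons_left smult_0_left mult_zero_left pCons_0_0 add_0_right)
    also have "I (smult (fact (2*k)) (WW a b k)) = fact (2*k) * ((-1)^k * fact k * fact k * (b-a)^(2*k+1) / fact (2*k+1))"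
    proof -
      have e: "k + k + 1 = 2*k+1" by simp
      show ?thesis unfolding I_def I_smult WW_def Beta[OF ab', of k k] e ..
    qed
    finally show ?thesis by (rule sign_helper)
  qed
  define S1p where "S1p = smult (1 / (fact (Suc k) * (b-a)^(Suc k))) (PP a b (Suc k))"
  define S2p where "S2p = smult (1 / (fact (k-1) * (b-a)^(k-1))) (PP a b (k-1))"
  have QSL: "(\<Sum>j\<le>Suc k. Aw j * (shifted_legendre a b (Suc k) (x j) * shifted_legendre a b (k-1) (x j))) = Q (poly (S1p * S2p))"
    unfolding Q_def S1p_def S2p_def poly_mult SL_poly[OF ab] by simp
  have dS1: "degree S1p \<le> Suc k" unfolding S1p_def using PP_deg by (metis degree_smult_le)
  have dS2: "degree S2p \<le> k-1" unfolding S2p_def using PP_deg by (metis degree_smult_le)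
  have kk2: "Suc k + (k-1) = 2*k" using k1 by simp
  have dS: "degree (S1p * S2p) \<le> 2*k" using degree_mult_le[of S1p S2p] dS1 dS2 k1 by linarith
  have IS: "I (S1p * S2p) = 0"
  proof -
    have "(pderiv^^(Suc k)) S2p = 0" using dS2 by (intro higher_pderiv_low) linarith
    then have "I (PP a b (Suc k) * S2p) = 0" unfolding I_def PP_def using F1[OF ab', of "Suc k" "Suc k" S2p] by simp
    then show ?thesis unfolding S1p_def I_def by (simp add: I_smult del: poly_mult)
  qed
  define cS where "cS = (1 / (fact (Suc k) * (b-a)^(Suc k))) * (fact (2 * Suc k) / fact (Suc k))
         * ((1 / (fact (k-1) * (b-a)^(k-1))) * (fact (2 * (k-1)) / fact (k-1)))"
  have cSe: "coeff (S1p * S2p) (2*k) = cS"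
    using coeff_mult_top[OF dS1 dS2] unfolding kk2 cS_def S1p_def S2p_def coeff_smult PP_coeff by simp
  have QS: "Q (poly (S1p * S2p)) = - cS * \<rho>" using RD[OF dS] IS cSe by simp
  obtain n where kn: "k = Suc n" using k1 by (cases k) auto
  have eq: "(\<alpha> * fact (Suc n) / fact (2 * Suc n))^2 * fact (2 * Suc n) * (fact (Suc n))^2 * (b-a)^(2 * Suc n + 1) / fact (2 * Suc n + 1)
             = - \<rho> * of_nat (Suc n) * \<alpha>^2 / of_nat (Suc (Suc n))"
    using S8 S9 unfolding c_def kn by simp
  have "cS * \<rho> = - (b-a) / of_nat (2 * Suc n - 1)"
    using final_arith[of "b-a" \<alpha> n \<rho>, OF _ anz eq] ab unfolding cS_def kn by simp
  moreover have Qv: "Q (poly (S1p * S2p)) = - (cS * \<rho>)" using QS by simp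
  ultimately have "Q (poly (S1p * S2p)) = (b-a) / real (2*k-1)" unfolding kn by (simp only: minus_divide_left minus_minus)
  then show False using C2 QSL by simp
qed




lemma lagrange:
  fixes x d :: "nat \<Rightarrow> real" and S :: "nat set"
  assumes fin: "finite S" and inj: "inj_on x S"
  shows "\<exists>D. degree D \<le> card S - 1 \<and> (\<forall>i\<in>S. poly D (x i) = d i)"
proof -
  define L where "L j = (\<Prod>m\<in>S - {j}. [:- x m, 1:])" for j
  define D where "D = (\<Sum>j\<in>S. smult (d j / (\<Prod>m\<in>S - {j}. (x j - x m))) (L j))"
  have dL: "degree (L j) \<le> card S - 1" if "j \<in> S" for j
  proof -
    have "degree (L j) \<le> sum (degree \<circ> (\<lambda>m. [:- x m, 1:])) (S - {j})"
      unfolding L_def using fin by (intro degree_prod_sum_le) simp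
    also have "\<dots> = card (S - {j})" by simp
    also have "\<dots> = card S - 1" using that fin by simp
    finally show ?thesis .
  qed
  have "degree D \<le> card S - 1" unfolding D_def
  proof (rule degree_sum_le[OF fin])
    fix j assume "j \<in> S"
    then show "degree (smult (d j / (\<Prod>m\<in>S - {j}. (x j - x m))) (L j)) \<le> card S - 1"
      using dL degree_smult_le order.trans by blast
  qed
  moreover have "poly D (x i) = d i" if i: "i \<in> S" for i
  proof -
    have "poly D (x i) = (\<Sum>j\<in>S. d j / (\<Prod>m\<in>S - {j}. (x j - x m)) * (\<Prod>m\<in>S - {j}. (x i - x m)))"
      unfolding D_def L_def by (simp add: poly_sum poly_prod)
    also have "\<dots> = (\<Sum>j\<in>S. if j = i then d i else 0)"
    proof (rule sum.cong)
      fix j assume j: "j \<in> S"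
      show "d j / (\<Prod>m\<in>S - {j}. (x j - x m)) * (\<Prod>m\<in>S - {j}. (x i - x m)) = (if j = i then d i else 0)"
      proof (cases "j = i")
        case True
        have "(\<Prod>m\<in>S - {j}. (x j - x m)) \<noteq> 0" using fin inj j
          by (subst prod_zero_iff) (auto simp: inj_on_def)
        then show ?thesis using True by simp
      next
        case False
        then have "(\<Prod>m\<in>S - {j}. (x i - x m)) = 0" using fin i by (intro prod_zero) auto
        then show ?thesis using False by simp
      qed
    qed simp
    also have "\<dots> = d i" using i fin by simp
    finally show ?thesis .
  qed
  ultimately show ?thesis by blast
qed

lemma strict_chain: assumes "\<forall>j\<le>k. (f::nat \<Rightarrow> real) j < f (Suc j)" "j < j'" "j' \<le> Suc k"
  shows "f j < f j'"
  using assms(2,3)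
proof (induction j')
  case (Suc j')
  show ?case
  proof (cases "j = j'")
    case True then show ?thesis using assms(1) Suc.prems by auto
  next
    case False then have "f j < f j'" using Suc by auto
    also have "f j' < f (Suc j')" using assms(1) Suc.prems by auto
    finally show ?thesis .
  qed
qed simp

lemma sum_first_only: assumes "\<forall>m. 1 \<le> m \<and> m \<le> k \<longrightarrow> (f::nat \<Rightarrow> real) m = 0" "j \<le> k"
  shows "(\<Sum>m\<le>j. f m) = f 0"
proof -
  have "(\<Sum>m\<le>j. f m) = (\<Sum>m\<le>j. if m = 0 then f 0 else 0)"
    using assms by (intro sum.cong) auto
  also have "\<dots> = f 0" by simp
  finally show ?thesis .
qed

lemma NZ:
  fixes a b :: real and x Aw :: "nat \<Rightarrow> real" and k :: nat
  assumes ab: "a < b" and x0: "x 0 = a" and xk: "x (Suc k) = b" and k1: "1 \<le> k"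
    and E: "\<forall>q::real poly. degree q \<le> 2*k-1 \<longrightarrow> integral {a..b} (poly q) = (\<Sum>j\<le>Suc k. Aw j * poly q (x j))"
    and C2: "(b-a)/real(2*k-1) - (\<Sum>j\<le>Suc k. Aw j * (shifted_legendre a b (Suc k) (x j) * shifted_legendre a b (k-1) (x j))) > 0"
    and j: "1 \<le> j" "j \<le> k"
  shows "Aw j \<noteq> 0"
proof
  assume A0: "Aw j = 0"
  define \<omega> where "\<omega> = (\<Prod>m\<in>{1..k} - {j}. [:- x m, 1:])"
  have wnz: "\<omega> \<noteq> 0" unfolding \<omega>_def by (subst prod_zero_iff) auto
  have dw: "degree \<omega> \<le> k - 1"
  proof -
    have "degree \<omega> \<le> sum (degree \<circ> (\<lambda>m. [:- x m, 1:])) ({1..k} - {j})"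
      unfolding \<omega>_def by (intro degree_prod_sum_le) simp
    also have "\<dots> = card ({1..k} - {j})" by simp
    also have "\<dots> = k - 1" using j by simp
    finally show ?thesis .
  qed
  define v where "v = pint \<omega> + [: - poly (pint \<omega>) a - Aw 0 * poly \<omega> a :]"
  have pv: "pderiv v = \<omega>" unfolding v_def by (simp add: pderiv_add pint_deriv)
  have va: "poly v a = - Aw 0 * poly \<omega> a" unfolding v_def by simp
  have dv: "degree v \<le> k" unfolding v_def using pint_degree[of \<omega>] dw k1
    by (intro degree_add_le) auto
  have z: "\<forall>m. 1 \<le> m \<and> m \<le> k \<longrightarrow> Aw m * poly \<omega> (x m) = 0"
  proof (intro allI impI)
    fix m assume m: "1 \<le> m \<and> m \<le> k"
    show "Aw m * poly \<omega> (x m) = 0"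
    proof (cases "m = j")
      case True then show ?thesis using A0 by simp
    next
      case False
      then have "poly \<omega> (x m) = 0" unfolding \<omega>_def poly_prod using m by (intro prod_zero) auto
      then show ?thesis by simp
    qed
  qed
  have M0: "\<forall>j'\<le>k. poly v a + (\<Sum>m\<le>j'. Aw m * poly (pderiv v) (x m)) = 0"
  proof (intro allI impI)
    fix j' assume "j' \<le> k"
    then have "(\<Sum>m\<le>j'. Aw m * poly \<omega> (x m)) = Aw 0 * poly \<omega> (x 0)"
      using sum_first_only[OF z] by blast
    then show "poly v a + (\<Sum>m\<le>j'. Aw m * poly (pderiv v) (x m)) = 0" unfolding pv va x0 by simp
  qed
  have "v = 0" by (rule INJ[OF ab x0 xk k1 E C2 dv M0])
  then show False using pv wnz by simp
qed

lemma SURJ: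
  fixes a b :: real and x Aw y :: "nat \<Rightarrow> real" and k :: nat
  assumes x0: "x 0 = a" and k1: "1 \<le> k" and inj: "inj_on x {1..k}"
    and nz: "\<forall>j. 1 \<le> j \<and> j \<le> k \<longrightarrow> Aw j \<noteq> 0"
  shows "\<exists>v. degree v \<le> k \<and> (\<forall>j\<le>k. poly v a + (\<Sum>m\<le>j. Aw m * poly (pderiv v) (x m)) = y j)"
proof -
  obtain D where dD: "degree D \<le> card {1..k} - 1" and pD: "\<forall>i\<in>{1..k}. poly D (x i) = (y i - y (i - 1)) / Aw i"
    using lagrange[of "{1..k}" x "\<lambda>i. (y i - y (i - 1)) / Aw i"] inj by auto
  define v where "v = pint D + [: y 0 - poly (pint D) a - Aw 0 * poly D a :]"
  have pv: "pderiv v = D" unfolding v_def by (simp add: pderiv_add pint_deriv)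
  have va: "poly v a = y 0 - Aw 0 * poly D a" unfolding v_def by simp
  have dv: "degree v \<le> k" unfolding v_def using pint_degree[of D] dD k1
    by (intro degree_add_le) auto
  have tel: "(\<Sum>m\<le>j. Aw m * poly D (x m)) = Aw 0 * poly D a + y j - y 0" if "j \<le> k" for j
    using that
  proof (induction j)
    case 0 then show ?case using x0 by simp
  next
    case (Suc j)
    have "Aw (Suc j) * poly D (x (Suc j)) = y (Suc j) - y j"
      using pD nz Suc.prems by auto
    then show ?case using Suc by simp
  qed
  show ?thesis
    by (rule exI[of _ v]) (use dv tel in \<open>simp add: pv va\<close>)
qed




lemma sbp: "(\<Sum>j\<le>k. (m::nat\<Rightarrow>real) j * (f j - f (Suc j))) = m 0 * f 0 + (\<Sum>j\<in>{1..k}. (m j - m (j - 1)) * f j) - m k * f (Suc k)"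
proof (induction k)
  case (Suc k)
  have "{1..Suc k} = insert (Suc k) {1..k}" by auto
  then have "(\<Sum>j\<in>{1..Suc k}. (m j - m (j - 1)) * f j) = (m (Suc k) - m k) * f (Suc k) + (\<Sum>j\<in>{1..k}. (m j - m (j - 1)) * f j)"
    by simp
  then show ?case using Suc by (simp add: algebra_simps)
qed (simp add: algebra_simps)

lemma cell_flux:
  fixes a b \<beta> U :: real and x Aw mm fl :: "nat \<Rightarrow> real" and u w :: "real poly" and k :: nat
  assumes x0: "x 0 = a" and xk: "x (Suc k) = b" and ab: "a \<le> b" and k1: "1 \<le> k"
    and E: "\<forall>q::real poly. degree q \<le> 2*k-1 \<longrightarrow> integral {a..b} (poly q) = (\<Sum>j\<le>Suc k. Aw j * poly q (x j))"
    and dw: "degree w \<le> k"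
    and mm: "\<And>j. mm j = poly w a + (\<Sum>m\<le>j. Aw m * poly (pderiv w) (x m))"
    and fl0: "fl 0 = \<beta> * U" and flj: "\<And>j. 1 \<le> j \<Longrightarrow> j \<le> k \<Longrightarrow> fl j = \<beta> * poly u (x j)"
    and flk: "fl (Suc k) = \<beta> * poly u b"
  shows "(\<Sum>j\<le>k. mm j * (fl j - fl (Suc j))) = \<beta> * ((\<Sum>j\<le>Suc k. Aw j * (poly u (x j) * poly (pderiv w) (x j)))
            + poly w a * U - poly w b * poly u b - Aw 0 * poly (pderiv w) a * (poly u a - U))"
proof -
  have dw': "degree (pderiv w) \<le> 2*k-1" using dw k1 by (simp add: degree_pderiv)
  have Qw: "(\<Sum>j\<le>Suc k. Aw j * poly (pderiv w) (x j)) = poly w b - poly w a"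
    using E dw' I_pderiv[OF ab, of w] by simp
  have mk: "mm k = poly w b - Aw (Suc k) * poly (pderiv w) b"
    using mm[of k] Qw xk by simp
  have m0: "mm 0 = poly w a + Aw 0 * poly (pderiv w) a" using mm[of 0] x0 by simp
  have md: "(\<Sum>j\<in>{1..k}. (mm j - mm (j - 1)) * fl j) = \<beta> * (\<Sum>j\<in>{1..k}. Aw j * (poly u (x j) * poly (pderiv w) (x j)))"
    unfolding sum_distrib_left
  proof (rule sum.cong)
    fix j assume j: "j \<in> {1..k}"
    then obtain j' where j': "j = Suc j'" by (cases j) auto
    have "mm j - mm (j - 1) = Aw j * poly (pderiv w) (x j)" unfolding mm j' by simp
    then show "(mm j - mm (j - 1)) * fl j = \<beta> * (Aw j * (poly u (x j) * poly (pderiv w) (x j)))"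
      using flj j by simp
  qed simp
  have Qs: "(\<Sum>j\<le>Suc k. Aw j * (poly u (x j) * poly (pderiv w) (x j))) =
      Aw 0 * (poly u a * poly (pderiv w) a) + (\<Sum>j\<in>{1..k}. Aw j * (poly u (x j) * poly (pderiv w) (x j)))
      + Aw (Suc k) * (poly u b * poly (pderiv w) b)"
    using sum_split_ends[of "\<lambda>j. Aw j * (poly u (x j) * poly (pderiv w) (x j))" k] x0 xk by simp
  show ?thesis unfolding sbp md mk m0 Qs fl0 flk by (simp add: algebra_simps)
qed

lemma prev_next:
  assumes "1 \<le> N" "i < N"
  shows "prev_cell N i < N" "next_cell N i < N" "next_cell N (prev_cell N i) = i" "prev_cell N (next_cell N i) = i"
proof -
  show "prev_cell N i < N" "next_cell N i < N" unfolding prev_cell_def next_cell_def using assms by auto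
  have "next_cell N (prev_cell N i) = Suc (i + N - 1) mod N"
    unfolding prev_cell_def next_cell_def by (simp add: mod_Suc_eq)
  also have "Suc (i + N - 1) = i + N" using assms by simp
  finally show "next_cell N (prev_cell N i) = i" using assms by simp
  show "prev_cell N (next_cell N i) = i"
  proof (cases "Suc i < N")
    case True
    then have "prev_cell N (next_cell N i) = (i + N) mod N" unfolding prev_cell_def next_cell_def by simp
    then show ?thesis using assms by simp
  next
    case False
    then have "Suc i = N" using assms by simp
    then show ?thesis unfolding prev_cell_def next_cell_def by simp
  qed
qed

lemma reindex_jump:
  assumes N: "1 \<le> N"
  shows "(\<Sum>i<N. poly (w i) (xs i) * poly (u (prev_cell N i)) (xs (Suc (prev_cell N i))))
       = (\<Sum>i<N. poly (u i) (xs (Suc i)) * poly (w (next_cell N i)) (xs (next_cell N i)))"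
proof (rule sum.reindex_bij_witness[of _ "next_cell N" "prev_cell N"])
  fix i assume "i \<in> {..<N}"
  then have i: "i < N" by simp
  show "next_cell N (prev_cell N i) = i" "prev_cell N i \<in> {..<N}" using prev_next[OF N i] by auto
  show "poly (u (prev_cell N i)) (xs (Suc (prev_cell N i))) * poly (w (next_cell N (prev_cell N i))) (xs (next_cell N (prev_cell N i)))
      = poly (w i) (xs i) * poly (u (prev_cell N i)) (xs (Suc (prev_cell N i)))"
    using prev_next[OF N i] by (simp add: mult.commute)
next
  fix i assume "i \<in> {..<N}"
  then have i: "i < N" by simp
  show "prev_cell N (next_cell N i) = i" "next_cell N i \<in> {..<N}" using prev_next[OF N i] by auto
qed




lemma pair_star_cong: "(\<And>i j. i < N \<Longrightarrow> j \<le> k \<Longrightarrow> w1 i j = w2 i j) \<Longrightarrow> pair_star N k p v w1 = pair_star N k p v w2"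
  unfolding pair_star_def by (intro sum.cong refl) auto

lemma src_star_cong: "(\<And>i j. i < N \<Longrightarrow> j \<le> k \<Longrightarrow> w1 i j = w2 i j) \<Longrightarrow> src_star N k p g w1 = src_star N k p g w2"
  unfolding src_star_def by (intro sum.cong refl) auto

lemma flux_term_cong: "(\<And>i j. i < N \<Longrightarrow> j \<le> k \<Longrightarrow> w1 i j = w2 i j) \<Longrightarrow> flux_term N k xs p \<beta> u w1 = flux_term N k xs p \<beta> u w2"
  unfolding flux_term_def by (intro sum.cong refl) auto

lemma S_cell:
  assumes S: "assumption_S N k xs p A" and i: "i < N"
  shows "1 \<le> k"
    "\<forall>q::real poly. degree q \<le> 2*k-1 \<longrightarrow> integral {xs i..xs (Suc i)} (poly q) = (\<Sum>j\<le>Suc k. A i j * poly q (p i j))"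
    "(xs (Suc i) - xs i)/real(2*k-1) - (\<Sum>j\<le>Suc k. A i j * (shifted_legendre (xs i) (xs (Suc i)) (Suc k) (p i j) * shifted_legendre (xs i) (xs (Suc i)) (k-1) (p i j))) > 0"
  using S i unfolding assumption_S_def quad_def by auto

lemma FH:
  assumes mesh: "valid_mesh N k xs p" and S: "assumption_S N k xs p A"
    and u: "in_Vk N k u" and w: "in_Vk N k w"
  shows "flux_term N k xs p \<beta> u (Mstar A xs p w) = Hstar N k xs p A \<beta> u w"
proof -
  have N1: "1 \<le> N" using mesh unfolding valid_mesh_def by simp
  define U where "U i = poly (u (prev_cell N i)) (xs (Suc (prev_cell N i)))" for i
  define Qi where "Qi i = quad k A p i (\<lambda>x. poly (u i) x * poly (pderiv (w i)) x)" for i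
  define J1 where "J1 i = poly (w i) (xs i) * U i" for i
  define J2 where "J2 i = poly (w i) (xs (Suc i)) * poly (u i) (xs (Suc i))" for i
  define J3 where "J3 i = A i 0 * poly (pderiv (w i)) (xs i) * (poly (u i) (xs i) - U i)" for i
  have cell: "(\<Sum>j\<le>k. Mstar A xs p w i j * (flux N k xs p \<beta> u i j - flux N k xs p \<beta> u i (Suc j)))
       = \<beta> * (Qi i + J1 i - J2 i - J3 i)" if i: "i < N" for i
  proof -
    have mi: "p i 0 = xs i" "p i (Suc k) = xs (Suc i)" "xs i \<le> xs (Suc i)"
      using mesh i unfolding valid_mesh_def by (auto simp: less_imp_le)
    note Sc = S_cell[OF S i]
    have "(\<Sum>j\<le>k. Mstar A xs p w i j * (flux N k xs p \<beta> u i j - flux N k xs p \<beta> u i (Suc j)))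
       = \<beta> * ((\<Sum>j\<le>Suc k. A i j * (poly (u i) (p i j) * poly (pderiv (w i)) (p i j)))
            + poly (w i) (xs i) * U i - poly (w i) (xs (Suc i)) * poly (u i) (xs (Suc i)) - A i 0 * poly (pderiv (w i)) (xs i) * (poly (u i) (xs i) - U i))"
    proof (rule cell_flux[OF mi(1,2,3) Sc(1,2)])
      show "degree (w i) \<le> k" using w i unfolding in_Vk_def by auto
      show "\<And>j. Mstar A xs p w i j = poly (w i) (xs i) + (\<Sum>m\<le>j. A i m * poly (pderiv (w i)) (p i m))"
        unfolding Mstar_def ..
      show "flux N k xs p \<beta> u i 0 = \<beta> * U i" unfolding flux_def U_def by simp
      show "\<And>j. 1 \<le> j \<Longrightarrow> j \<le> k \<Longrightarrow> flux N k xs p \<beta> u i j = \<beta> * poly (u i) (p i j)"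
        unfolding flux_def by auto
      show "flux N k xs p \<beta> u i (Suc k) = \<beta> * poly (u i) (xs (Suc i))" unfolding flux_def by simp
    qed
    then show ?thesis unfolding Qi_def J1_def J2_def J3_def quad_def .
  qed
  have "flux_term N k xs p \<beta> u (Mstar A xs p w) = (\<Sum>i<N. \<beta> * (Qi i + J1 i - J2 i - J3 i))"
    unfolding flux_term_def using cell by (intro sum.cong) auto
  also have "\<dots> = \<beta> * ((\<Sum>i<N. Qi i) + (\<Sum>i<N. J1 i) - (\<Sum>i<N. J2 i) - (\<Sum>i<N. J3 i))"
    by (simp add: sum_distrib_left[symmetric] sum.distrib sum_subtractf)
  also have "(\<Sum>i<N. J1 i) = (\<Sum>i<N. poly (u i) (xs (Suc i)) * poly (w (next_cell N i)) (xs (next_cell N i)))"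
    unfolding J1_def U_def by (rule reindex_jump[OF N1])
  also have "\<beta> * ((\<Sum>i<N. Qi i) + (\<Sum>i<N. poly (u i) (xs (Suc i)) * poly (w (next_cell N i)) (xs (next_cell N i))) - (\<Sum>i<N. J2 i) - (\<Sum>i<N. J3 i))
      = Hstar N k xs p A \<beta> u w"
    unfolding Hstar_def Qi_def J2_def J3_def U_def
    by (simp add: right_diff_distrib sum_subtractf algebra_simps)
  finally show ?thesis .
qed

lemma Mstar_surj:
  assumes mesh: "valid_mesh N k xs p" and S: "assumption_S N k xs p A"
  shows "\<exists>W. in_Vk N k W \<and> (\<forall>i<N. \<forall>j\<le>k. Mstar A xs p W i j = ws i j)"
proof -
  have "\<forall>i. \<exists>v. i < N \<longrightarrow> degree v \<le> k \<and> (\<forall>j\<le>k. poly v (xs i) + (\<Sum>m\<le>j. A i m * poly (pderiv v) (p i m)) = ws i j)"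
  proof
    fix i
    show "\<exists>v. i < N \<longrightarrow> degree v \<le> k \<and> (\<forall>j\<le>k. poly v (xs i) + (\<Sum>m\<le>j. A i m * poly (pderiv v) (p i m)) = ws i j)"
    proof (cases "i < N")
      case False then show ?thesis by simp
    next
      case i: True
      have mi: "xs i < xs (Suc i)" "p i 0 = xs i" "p i (Suc k) = xs (Suc i)" "\<forall>j\<le>k. p i j < p i (Suc j)"
        using mesh i unfolding valid_mesh_def by auto
      note Sc = S_cell[OF S i]
      have nz: "\<forall>j. 1 \<le> j \<and> j \<le> k \<longrightarrow> A i j \<noteq> 0"
        using NZ[OF mi(1,2,3) Sc] by blast
      have inj: "inj_on (p i) {1..k}"
      proof (rule inj_onI)
        fix j j' assume jj: "j \<in> {1..k}" "j' \<in> {1..k}" "p i j = p i j'"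
        show "j = j'"
        proof (rule ccontr)
          assume "j \<noteq> j'"
          then have "j < j' \<or> j' < j" by arith
          then show False using strict_chain[OF mi(4)] jj by fastforce
        qed
      qed
      show ?thesis using SURJ[OF mi(2) Sc(1) inj nz, of "ws i"] i by blast
    qed
  qed
  then obtain W where W: "\<forall>i. i < N \<longrightarrow> degree (W i) \<le> k \<and> (\<forall>j\<le>k. poly (W i) (xs i) + (\<Sum>m\<le>j. A i m * poly (pderiv (W i)) (p i m)) = ws i j)"
    by (metis choice)
  show ?thesis
    by (rule exI[of _ W]) (use W in \<open>auto simp: in_Vk_def Mstar_def\<close>)
qed

theorem theorem3p12:
  fixes N k s l :: nat
    and xs :: "nat \<Rightarrow> real" and p A :: "nat \<Rightarrow> nat \<Rightarrow> real"
    and \<beta> \<tau> :: real and c d :: "nat \<Rightarrow> nat \<Rightarrow> real"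
    and u :: "nat \<Rightarrow> nat \<Rightarrow> real poly"
    and g :: "nat \<Rightarrow> real \<Rightarrow> real"
  assumes mesh: "valid_mesh N k xs p"
    and S: "assumption_S N k xs p A"
    and beta: "\<beta> > 0"
    and csum: "\<forall>l<s. (\<Sum>\<kappa>\<le>l. c l \<kappa>) = 1"
    and stages: "\<forall>\<kappa>\<le>s. in_Vk N k (u \<kappa>)"
    and gmeas: "\<forall>\<kappa><s. g \<kappa> measurable_on {xs 0..xs N}"
    and gL2: "\<forall>\<kappa><s. (\<lambda>x. (g \<kappa> x)\<^sup>2) integrable_on {xs 0..xs N}"
    and lt: "l < s"
  shows "(\<forall>w :: nat \<Rightarrow> nat \<Rightarrow> real.
            pair_star N k p (u (Suc l)) w =
            (\<Sum>\<kappa>\<le>l. c l \<kappa> * pair_star N k p (u \<kappa>) w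
                 + \<tau> * d l \<kappa> * (flux_term N k xs p \<beta> (u \<kappa>) w + src_star N k p (g \<kappa>) w)))
     \<longleftrightarrow>
         (\<forall>w :: nat \<Rightarrow> real poly. in_Vk N k w \<longrightarrow>
            pair_star N k p (u (Suc l)) (Mstar A xs p w) =
            (\<Sum>\<kappa>\<le>l. c l \<kappa> * pair_star N k p (u \<kappa>) (Mstar A xs p w)
                 + \<tau> * d l \<kappa> * (Hstar N k xs p A \<beta> (u \<kappa>) w
                                     + src_star N k p (g \<kappa>) (Mstar A xs p w))))"
proof -
  have FHk: "flux_term N k xs p \<beta> (u \<kappa>) (Mstar A xs p w) = Hstar N k xs p A \<beta> (u \<kappa>) w"
    if "\<kappa> \<le> l" "in_Vk N k w" for \<kappa> w
    using FH[OF mesh S _ that(2)] stages that(1) lt by simp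
  show ?thesis
  proof
    assume L: "\<forall>w :: nat \<Rightarrow> nat \<Rightarrow> real.
            pair_star N k p (u (Suc l)) w =
            (\<Sum>\<kappa>\<le>l. c l \<kappa> * pair_star N k p (u \<kappa>) w
                 + \<tau> * d l \<kappa> * (flux_term N k xs p \<beta> (u \<kappa>) w + src_star N k p (g \<kappa>) w))"
    show "\<forall>w :: nat \<Rightarrow> real poly. in_Vk N k w \<longrightarrow>
            pair_star N k p (u (Suc l)) (Mstar A xs p w) =
            (\<Sum>\<kappa>\<le>l. c l \<kappa> * pair_star N k p (u \<kappa>) (Mstar A xs p w)
                 + \<tau> * d l \<kappa> * (Hstar N k xs p A \<beta> (u \<kappa>) w
                                     + src_star N k p (g \<kappa>) (Mstar A xs p w)))"
    proof (intro allI impI)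
      fix w :: "nat \<Rightarrow> real poly" assume w: "in_Vk N k w"
      have "pair_star N k p (u (Suc l)) (Mstar A xs p w) =
            (\<Sum>\<kappa>\<le>l. c l \<kappa> * pair_star N k p (u \<kappa>) (Mstar A xs p w)
                 + \<tau> * d l \<kappa> * (flux_term N k xs p \<beta> (u \<kappa>) (Mstar A xs p w) + src_star N k p (g \<kappa>) (Mstar A xs p w)))"
        using L by blast
      also have "\<dots> = (\<Sum>\<kappa>\<le>l. c l \<kappa> * pair_star N k p (u \<kappa>) (Mstar A xs p w)
                 + \<tau> * d l \<kappa> * (Hstar N k xs p A \<beta> (u \<kappa>) w + src_star N k p (g \<kappa>) (Mstar A xs p w)))"
        using FHk w by (intro sum.cong) auto
      finally show "pair_star N k p (u (Suc l)) (Mstar A xs p w) =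
            (\<Sum>\<kappa>\<le>l. c l \<kappa> * pair_star N k p (u \<kappa>) (Mstar A xs p w)
                 + \<tau> * d l \<kappa> * (Hstar N k xs p A \<beta> (u \<kappa>) w
                                     + src_star N k p (g \<kappa>) (Mstar A xs p w)))" .
    qed
  next
    assume R: "\<forall>w :: nat \<Rightarrow> real poly. in_Vk N k w \<longrightarrow>
            pair_star N k p (u (Suc l)) (Mstar A xs p w) =
            (\<Sum>\<kappa>\<le>l. c l \<kappa> * pair_star N k p (u \<kappa>) (Mstar A xs p w)
                 + \<tau> * d l \<kappa> * (Hstar N k xs p A \<beta> (u \<kappa>) w
                                     + src_star N k p (g \<kappa>) (Mstar A xs p w)))"
    show "\<forall>w :: nat \<Rightarrow> nat \<Rightarrow> real.
            pair_star N k p (u (Suc l)) w =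
            (\<Sum>\<kappa>\<le>l. c l \<kappa> * pair_star N k p (u \<kappa>) w
                 + \<tau> * d l \<kappa> * (flux_term N k xs p \<beta> (u \<kappa>) w + src_star N k p (g \<kappa>) w))"
    proof
      fix ws :: "nat \<Rightarrow> nat \<Rightarrow> real"
      obtain W where W: "in_Vk N k W" and MW: "\<forall>i<N. \<forall>j\<le>k. Mstar A xs p W i j = ws i j"
        using Mstar_surj[OF mesh S] by blast
      have eqw: "\<And>i j. i < N \<Longrightarrow> j \<le> k \<Longrightarrow> ws i j = Mstar A xs p W i j" using MW by simp
      have "pair_star N k p (u (Suc l)) ws = pair_star N k p (u (Suc l)) (Mstar A xs p W)"
        by (rule pair_star_cong[OF eqw])
      also have "\<dots> = (\<Sum>\<kappa>\<le>l. c l \<kappa> * pair_star N k p (u \<kappa>) (Mstar A xs p W)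
                 + \<tau> * d l \<kappa> * (Hstar N k xs p A \<beta> (u \<kappa>) W + src_star N k p (g \<kappa>) (Mstar A xs p W)))"
        using R W by blast
      also have "\<dots> = (\<Sum>\<kappa>\<le>l. c l \<kappa> * pair_star N k p (u \<kappa>) ws
                 + \<tau> * d l \<kappa> * (flux_term N k xs p \<beta> (u \<kappa>) ws + src_star N k p (g \<kappa>) ws))"
      proof (rule sum.cong[OF refl])
        fix \<kappa> assume "\<kappa> \<in> {..l}"
        then have kl: "\<kappa> \<le> l" by simp
        have "pair_star N k p (u \<kappa>) (Mstar A xs p W) = pair_star N k p (u \<kappa>) ws"
          by (rule pair_star_cong[OF eqw, symmetric])
        moreover have "src_star N k p (g \<kappa>) (Mstar A xs p W) = src_star N k p (g \<kappa>) ws"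
          by (rule src_star_cong[OF eqw, symmetric])
        moreover have "Hstar N k xs p A \<beta> (u \<kappa>) W = flux_term N k xs p \<beta> (u \<kappa>) ws"
        proof -
          have "flux_term N k xs p \<beta> (u \<kappa>) (Mstar A xs p W) = flux_term N k xs p \<beta> (u \<kappa>) ws"
            by (rule flux_term_cong[OF eqw, symmetric])
          then show ?thesis using FHk[OF kl W] by simp
        qed
        ultimately show "c l \<kappa> * pair_star N k p (u \<kappa>) (Mstar A xs p W)
                 + \<tau> * d l \<kappa> * (Hstar N k xs p A \<beta> (u \<kappa>) W + src_star N k p (g \<kappa>) (Mstar A xs p W))
              = c l \<kappa> * pair_star N k p (u \<kappa>) ws
                 + \<tau> * d l \<kappa> * (flux_term N k xs p \<beta> (u \<kappa>) ws + src_star N k p (g \<kappa>) ws)" by simp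
      qed
      finally show "pair_star N k p (u (Suc l)) ws =
            (\<Sum>\<kappa>\<le>l. c l \<kappa> * pair_star N k p (u \<kappa>) ws
                 + \<tau> * d l \<kappa> * (flux_term N k xs p \<beta> (u \<kappa>) ws + src_star N k p (g \<kappa>) ws))" .
    qed
  qed
qed


end
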